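(* Let $0<c<1$, let $K=\mathbb{C}(\lambda,\sqrt{1-c^2\lambda})$ and consider the Legendre elliptic curve $L_\lambda: Y^2=X(X-1)(X-\lambda)$ over $K$. Then the point $$B(\lambda)=\left(\frac{(1-c^2)\lambda}{1-c^2\lambda},\ \frac{c\sqrt{1-c^2}\,\lambda(1-\lambda)}{(1-c^2\lambda)\sqrt{1-c^2\lambda}}\right)\in L_\lambda(K)$$ (the billiard section) is not a torsion point of $L_\lambda(K)$.
   Context: This section encodes the billiard map of the elliptical billiard $x^2+y^2/(1-c^2)=1$ (foci $(\pm c,0)$) on the caustic with parameter $s=c^2\lambda$, transported to the Legendre model. *)

theory Defs
  imports Complex_Main "HOL-Computational_Algebra.Polynomial" "HOL-Computational_Algebra.Fraction_Field"
begin

text \<open>Points of a Weierstrass curve y^2 = x^3 + a2 x^2 + a4 x + a6 over a field: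
  None is the point at infinity O, Some (x,y) an affine point.\<close>

definition on_curve :: "'a::field \<Rightarrow> 'a \<Rightarrow> 'a \<Rightarrow> ('a \<times> 'a) option \<Rightarrow> bool" where
  "on_curve a2 a4 a6 P = (case P of None \<Rightarrow> True
     | Some (x, y) \<Rightarrow> y^2 = x^3 + a2 * x^2 + a4 * x + a6)"

text \<open>Chord-tangent group law (valid for points on the curve, char not 2).\<close>
definition ec_add :: "'a::field \<Rightarrow> 'a \<Rightarrow> 'a \<Rightarrow> ('a \<times> 'a) option \<Rightarrow> ('a \<times> 'a) option \<Rightarrow> ('a \<times> 'a) option" where
  "ec_add a2 a4 a6 P Q = (case P of None \<Rightarrow> Q | Some (x1, y1) \<Rightarrow>
     (case Q of None \<Rightarrow> P | Some (x2, y2) \<Rightarrow>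
       (if x1 = x2 \<and> y1 + y2 = 0 then None
        else let l = (if x1 = x2 then (3 * x1^2 + 2 * a2 * x1 + a4) / (2 * y1)
                      else (y2 - y1) / (x2 - x1));
                 x3 = l^2 - a2 - x1 - x2
             in Some (x3, - (y1 + l * (x3 - x1))))))"

fun ec_mult :: "'a::field \<Rightarrow> 'a \<Rightarrow> 'a \<Rightarrow> nat \<Rightarrow> ('a \<times> 'a) option \<Rightarrow> ('a \<times> 'a) option" where
  "ec_mult a2 a4 a6 0 P = None"
| "ec_mult a2 a4 a6 (Suc n) P = ec_add a2 a4 a6 P (ec_mult a2 a4 a6 n P)"

definition ec_torsion :: "'a::field \<Rightarrow> 'a \<Rightarrow> 'a \<Rightarrow> ('a \<times> 'a) option \<Rightarrow> bool" where
  "ec_torsion a2 a4 a6 P = (\<exists>n>0. ec_mult a2 a4 a6 n P = None)"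

text \<open>The field K = C(lambda, sqrt(1 - c^2 lambda)) is modelled as the rational function
  field C(t) (type complex poly fract), with t = sqrt(1 - c^2 lambda) and
  lambda = (1 - t^2)/c^2.\<close>

definition K_const :: "complex \<Rightarrow> complex poly fract" where
  "K_const a = Fract [:a:] 1"

definition K_sqrt :: "complex poly fract" where
  "K_sqrt = Fract [:0, 1:] 1"

definition K_lambda :: "real \<Rightarrow> complex poly fract" where
  "K_lambda c = (1 - K_sqrt^2) / K_const (complex_of_real (c^2))"

text \<open>Legendre curve Y^2 = X(X-1)(X-lambda) = X^3 - (1+lambda) X^2 + lambda X.\<close>
definition leg_a2 :: "real \<Rightarrow> complex poly fract" where
  "leg_a2 c = - (1 + K_lambda c)"
definition leg_a4 :: "real \<Rightarrow> complex poly fract" where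
  "leg_a4 c = K_lambda c"

definition billiard_B :: "real \<Rightarrow> (complex poly fract \<times> complex poly fract) option" where
  "billiard_B c = (let lam = K_lambda c; cc = K_const (complex_of_real c);
      s = K_const (complex_of_real (sqrt (1 - c^2))); d = 1 - cc^2 * lam in
    Some ((1 - cc^2) * lam / d, cc * s * lam * (1 - lam) / (d * K_sqrt)))"

end

theory Submission imports Defs "HOL-Computational_Algebra.Formal_Laurent_Series"
begin
unbundle fps_syntax


definition PP :: "complex poly \<Rightarrow> complex fls" where
  "PP p = fps_to_fls (fps_of_poly p)"

lemma PP_add: "PP (p + q) = PP p + PP q" by (simp add: PP_def fps_of_poly_add)
lemma PP_mult: "PP (p * q) = PP p * PP q" by (simp add: PP_def fps_of_poly_mult fls_times_fps_to_fls)
lemma PP_eq0: "PP p = 0 \<longleftrightarrow> p = 0"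
  by (metis PP_def fps_of_poly_0 fps_of_poly_eq_iff fps_to_fls_eq_iff fps_zero_to_fls)
lemma PP_uminus: "PP (- p) = - PP p" by (simp add: PP_def fps_of_poly_uminus)

definition phi :: "complex poly fract \<Rightarrow> complex fls" where
  "phi f = (THE r. \<exists>p q. q \<noteq> 0 \<and> f = Fract p q \<and> r = PP p / PP q)"

lemma phi_Fract: assumes "q \<noteq> 0" shows "phi (Fract p q) = PP p / PP q"
  unfolding phi_def
proof (rule the_equality)
  show "\<exists>p' q'. q' \<noteq> 0 \<and> Fract p q = Fract p' q' \<and> PP p / PP q = PP p' / PP q'"
    using assms by blast
next
  fix r assume "\<exists>p' q'. q' \<noteq> 0 \<and> Fract p q = Fract p' q' \<and> r = PP p' / PP q'"
  then obtain p' q' where h: "q' \<noteq> 0" "Fract p q = Fract p' q'" "r = PP p' / PP q'" by blast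
  have "p * q' = p' * q" using h assms by (simp add: eq_fract)
  hence "PP p * PP q' = PP p' * PP q" by (metis PP_mult)
  moreover have "PP q \<noteq> 0" "PP q' \<noteq> 0" using assms h PP_eq0 by auto
  ultimately have "r * PP q * PP q' = PP p * PP q'" using h
    by (simp add: field_simps)
  hence "r * PP q = PP p" using \<open>PP q' \<noteq> 0\<close> by simp
  thus "r = PP p / PP q" using \<open>PP q \<noteq> 0\<close> by (simp add: field_simps)
qed

lemma phi_add: "phi (x + y) = phi x + phi y"
proof -
  obtain a b where x: "x = Fract a b" "b \<noteq> 0" by (cases x)
  obtain c d where y: "y = Fract c d" "d \<noteq> 0" by (cases y)
  have "PP b \<noteq> 0" "PP d \<noteq> 0" using x y PP_eq0 by auto
  thus ?thesis using x y by (simp add: phi_Fract PP_add PP_mult field_simps)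
qed

lemma phi_mult: "phi (x * y) = phi x * phi y"
proof -
  obtain a b where x: "x = Fract a b" "b \<noteq> 0" by (cases x)
  obtain c d where y: "y = Fract c d" "d \<noteq> 0" by (cases y)
  have "PP b \<noteq> 0" "PP d \<noteq> 0" using x y PP_eq0 by auto
  thus ?thesis using x y by (simp add: phi_Fract PP_add PP_mult field_simps)
qed

lemma phi_uminus: "phi (- x) = - phi x"
proof -
  obtain a b where x: "x = Fract a b" "b \<noteq> 0" by (cases x)
  thus ?thesis by (simp add: phi_Fract PP_uminus)
qed

lemma phi_0: "phi 0 = 0"
  by (simp add: Zero_fract_def phi_Fract PP_def)
lemma phi_1: "phi 1 = 1"
  by (simp add: One_fract_def phi_Fract PP_def)

lemma phi_diff: "phi (x - y) = phi x - phi y"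
  by (metis diff_conv_add_uminus phi_add phi_uminus)

lemma phi_inverse: "phi (inverse x) = inverse (phi x)"
proof -
  obtain a b where x: "x = Fract a b" "b \<noteq> 0" by (cases x)
  show ?thesis
  proof (cases "a = 0")
    case True
    have "Fract b 0 = (0::complex poly fract)" by (simp add: Zero_fract_def, transfer, simp)
    then show ?thesis using x True by (simp add: phi_Fract phi_0 PP_def flip: Zero_fract_def)
  next
    case False
    have "PP b \<noteq> 0" "PP a \<noteq> 0" using x False PP_eq0 by auto
    then show ?thesis using x False by (simp add: phi_Fract)
  qed
qed

lemma phi_divide: "phi (x / y) = phi x / phi y"
  by (simp add: divide_inverse phi_mult phi_inverse)

lemma phi_power: "phi (x ^ n) = phi x ^ n"
  by (induction n) (simp_all add: phi_1 phi_mult)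

lemma phi_of_nat: "phi (of_nat n) = of_nat n"
  by (induction n) (simp_all add: phi_0 phi_1 phi_add)

lemma phi_numeral: "phi (numeral n) = numeral n"
  by (metis of_nat_numeral phi_of_nat)

lemma phi_inj: "phi x = phi y \<Longrightarrow> x = y"
proof -
  assume h: "phi x = phi y"
  obtain a b where x: "x - y = Fract a b" "b \<noteq> 0" by (cases "x - y")
  have "phi (x - y) = 0" using h by (simp add: phi_diff)
  hence "PP a = 0" using x PP_eq0 by (simp add: phi_Fract)
  hence "a = 0" using PP_eq0 by auto
  hence "x - y = 0" using x by (simp add: Zero_fract_def eq_fract)
  thus ?thesis by simp
qed

lemmas phi_simps = phi_add phi_mult phi_uminus phi_0 phi_1 phi_diff phi_divide phi_power phi_numeral

definition mP :: "(complex poly fract \<times> complex poly fract) option \<Rightarrow> (complex fls \<times> complex fls) option" where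
  "mP = map_option (\<lambda>(x,y). (phi x, phi y))"

lemma mP_add: "mP (ec_add a2 a4 a6 P Q) = ec_add (phi a2) (phi a4) (phi a6) (mP P) (mP Q)"
proof -
  have eq: "phi u = phi v \<longleftrightarrow> u = v" for u v using phi_inj by blast
  have eq2: "phi u + phi v = 0 \<longleftrightarrow> u + v = 0" for u v by (metis phi_add phi_0 phi_inj)
  show ?thesis
    by (auto simp: mP_def ec_add_def Let_def phi_simps eq eq2 split: option.splits)
qed

lemma mP_mult: "mP (ec_mult a2 a4 a6 n P) = ec_mult (phi a2) (phi a4) (phi a6) n (mP P)"
  by (induction n) (simp_all add: mP_def mP_add[unfolded mP_def])




definition vge :: "complex fls \<Rightarrow> int \<Rightarrow> bool" where
  "vge f k \<longleftrightarrow> (\<forall>n<k. f $$ n = 0)"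

lemma vge_0[simp]: "vge 0 k" by (simp add: vge_def)
lemma vge_add: "vge f k \<Longrightarrow> vge g k \<Longrightarrow> vge (f + g) k" by (simp add: vge_def)
lemma vge_diff: "vge f k \<Longrightarrow> vge g k \<Longrightarrow> vge (f - g) k" by (simp add: vge_def)
lemma vge_uminus: "vge f k \<Longrightarrow> vge (- f) k" by (simp add: vge_def)
lemma vge_uminus_iff[simp]: "vge (- f) k = vge f k" by (simp add: vge_def)
lemma vge_mono: "vge f k \<Longrightarrow> m \<le> k \<Longrightarrow> vge f m" by (simp add: vge_def)

lemma vge_iff: "f \<noteq> 0 \<Longrightarrow> vge f k \<longleftrightarrow> k \<le> fls_subdegree f"
  unfolding vge_def
  by (metis fls_subdegree_leI linorder_not_le nth_fls_subdegree_nonzero order_less_le_trans)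

lemma vge_mult: "vge f k \<Longrightarrow> vge g m \<Longrightarrow> vge (f * g) (k + m)"
proof -
  assume a: "vge f k" "vge g m"
  show ?thesis
  proof (cases "f = 0 \<or> g = 0")
    case True thus ?thesis by auto
  next
    case False
    hence "k \<le> fls_subdegree f" "m \<le> fls_subdegree g" using a vge_iff by auto
    thus ?thesis unfolding vge_def by (intro allI impI fls_times_nth_eq0) simp
  qed
qed

lemma vge_const[simp]: "vge (fls_const a) 0" by (simp add: vge_def)
lemma vge_one[simp]: "vge 1 0" by (simp add: vge_def)
lemma vge_X[simp]: "vge fls_X 1" by (simp add: vge_def)

lemma vge_pow: "vge f k \<Longrightarrow> vge (f ^ n) (int n * k)"
proof (induction n)
  case 0 then show ?case by simp
next
  case (Suc n)
  have "vge (f * f ^ n) (k + int n * k)" using Suc vge_mult by blast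
  thus ?case by (simp add: algebra_simps)
qed

lemma unit_subdeg: assumes "vge e 1" shows "1 + e \<noteq> 0" "fls_subdegree (1 + e) = 0"
proof -
  have "(1 + e) $$ 0 = 1" using assms by (simp add: vge_def)
  thus "1 + e \<noteq> 0" by (metis fls_zero_nth zero_neq_one)
  show "fls_subdegree (1 + e) = 0"
    using \<open>(1 + e) $$ 0 = 1\<close> assms
    by (intro fls_subdegree_eqI) (auto simp: vge_def)
qed

lemma vge_inv_unit: assumes "vge e 1" shows "vge (inverse (1 + e)) 0"
proof -
  have "inverse (1 + e) \<noteq> 0" using unit_subdeg[OF assms] by simp
  thus ?thesis using unit_subdeg[OF assms] vge_iff by simp
qed

lemma vge_div_unit: "vge N k \<Longrightarrow> vge e 1 \<Longrightarrow> vge (N / (1 + e)) k"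
  using vge_mult[OF _ vge_inv_unit, of N k e] by (simp add: divide_inverse)

lemma vge_coeff: "vge f k \<Longrightarrow> n < k \<Longrightarrow> f $$ n = 0" by (simp add: vge_def)

lemma vge_nonzero_subdeg: "vge f k \<Longrightarrow> f \<noteq> 0 \<Longrightarrow> k \<le> fls_subdegree f" using vge_iff by auto




lemma zw_rel:
  fixes x y a b :: "complex fls"
  assumes "y^2 = x^3 + a*x^2 + b*x" "y \<noteq> 0"
  shows "1/y = (x/y)^3 + a*(x/y)^2*(1/y) + b*(x/y)*(1/y)^2"
proof -
  have "(x/y)^3 + a*(x/y)^2*(1/y) + b*(x/y)*(1/y)^2 = (x^3 + a*x^2 + b*x) / y^3"
    using assms(2) by (simp add: field_simps power2_eq_square power3_eq_cube)
  also have "\<dots> = y^2/y^3" using assms(1) by simp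
  also have "\<dots> = 1/y" using assms(2) by (simp add: power2_eq_square power3_eq_cube)
  finally show ?thesis by simp
qed

lemma chord_id:
  fixes z1 z2 w1 w2 a b :: "'a::comm_ring_1"
  assumes "w1 = z1^3 + a*z1^2*w1 + b*z1*w1^2" "w2 = z2^3 + a*z2^2*w2 + b*z2*w2^2"
  shows "(w2-w1)*(1 - a*z1^2 - b*z1*(w1+w2)) = (z2-z1)*(z1^2+z1*z2+z2^2 + a*(z1+z2)*w2 + b*w2^2)"
proof -
  have "(w2-w1)*(1 - a*z1^2 - b*z1*(w1+w2)) - (z2-z1)*(z1^2+z1*z2+z2^2 + a*(z1+z2)*w2 + b*w2^2)
     = (w2 - (z2^3 + a*z2^2*w2 + b*z2*w2^2)) - (w1 - (z1^3 + a*z1^2*w1 + b*z1*w1^2))"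
    by (simp add: algebra_simps power2_eq_square power3_eq_cube)
  also have "\<dots> = 0" using assms by simp
  finally show ?thesis by simp
qed

lemma finish:
  fixes a b x1 y1 x2 y2 l \<beta> x3 :: "complex fls"
  assumes va: "vge a 0" and vb: "vge b 0"
    and c1: "y1^2 = x1^3 + a*x1^2 + b*x1" and c2: "y2^2 = x2^3 + a*x2^2 + b*x2"
    and y1: "y1 \<noteq> 0" and y2: "y2 \<noteq> 0"
    and z1: "vge (x1/y1) 1" and w1: "vge (1/y1) 3"
    and z2: "vge (x2/y2) 1" and w2: "vge (1/y2) 3"
    and l1: "y1 = l*x1 + \<beta>" and l2: "y2 = l*x2 + \<beta>" and bne: "\<beta> \<noteq> 0"
    and x3: "x3 = l^2 - a - x1 - x2"
    and e2: "x1*x2 + x1*x3 + x2*x3 = b - 2*l*\<beta>" and e3: "x1*x2*x3 = \<beta>^2"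
    and md: "(-l/\<beta>) * (1 - a*(x1/y1)^2 - b*(x1/y1)*(1/y1+1/y2))
             = (x1/y1)^2+(x1/y1)*(x2/y2)+(x2/y2)^2 + a*(x1/y1+x2/y2)*(1/y2) + b*(1/y2)^2"
  shows "-(l*x3+\<beta>) \<noteq> 0 \<and> (-(l*x3+\<beta>))^2 = x3^3 + a*x3^2 + b*x3
         \<and> vge (x3/(-(l*x3+\<beta>))) 1 \<and> vge (1/(-(l*x3+\<beta>))) 3
         \<and> vge (x3/(-(l*x3+\<beta>)) - x1/y1 - x2/y2) 3"
proof -
  define Z1 where "Z1 = x1/y1"
  define Z2 where "Z2 = x2/y2"
  define W1 where "W1 = 1/y1"
  define W2 where "W2 = 1/y2"
  define \<mu> where "\<mu> = -l/\<beta>"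
  define \<nu> where "\<nu> = 1/\<beta>"
  note defs = Z1_def Z2_def W1_def W2_def
  have E: "vge (- (a*Z1^2) - b*Z1*(W1+W2)) 1"
  proof -
    have "vge (a*Z1^2) (0 + int 2 * 1)" using va z1 by (intro vge_mult vge_pow) (simp_all add: defs)
    moreover have "vge (b*Z1*(W1+W2)) (0 + 1 + 3)"
      using vb z1 w1 w2 by (intro vge_mult vge_add) (simp_all add: defs)
    ultimately show ?thesis by (intro vge_diff vge_uminus) (auto elim: vge_mono)
  qed
  have N: "vge (Z1^2+Z1*Z2+Z2^2 + a*(Z1+Z2)*W2 + b*W2^2) 2"
  proof -
    have "vge (Z1^2) (int 2 * 1)" "vge (Z2^2) (int 2 * 1)" using z1 z2 by (intro vge_pow, simp add: defs)+
    moreover have "vge (Z1*Z2) (1+1)" using z1 z2 by (intro vge_mult) (simp_all add: defs)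
    moreover have "vge (a*(Z1+Z2)*W2) (0+1+3)" using va z1 z2 w2
      by (intro vge_mult vge_add) (simp_all add: defs)
    moreover have "vge (b*W2^2) (0+int 2 * 3)" using vb w2 by (intro vge_mult vge_pow) (simp_all add: defs)
    ultimately show ?thesis by (intro vge_add) (auto elim: vge_mono)
  qed
  have mu_eq: "\<mu> = (Z1^2+Z1*Z2+Z2^2 + a*(Z1+Z2)*W2 + b*W2^2) / (1 + (- (a*Z1^2) - b*Z1*(W1+W2)))"
  proof -
    have "1 + (- (a*Z1^2) - b*Z1*(W1+W2)) \<noteq> 0" using unit_subdeg(1)[OF E] .
    moreover have "\<mu> * (1 + (- (a*Z1^2) - b*Z1*(W1+W2))) = Z1^2+Z1*Z2+Z2^2 + a*(Z1+Z2)*W2 + b*W2^2"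
      using md unfolding \<mu>_def defs by (simp add: algebra_simps)
    ultimately show ?thesis by (simp add: field_simps)
  qed
  have vmu: "vge \<mu> 2" unfolding mu_eq by (rule vge_div_unit[OF N E])
  have W1eq: "W1 = \<mu>*Z1 + \<nu>"
  proof -
    have "\<mu>*Z1 + \<nu> = (y1 - l*x1)/(\<beta>*y1)" unfolding defs \<mu>_def \<nu>_def using y1 bne
      by (simp add: field_simps)
    also have "\<dots> = \<beta>/(\<beta>*y1)" using l1 by simp
    also have "\<dots> = W1" using bne unfolding defs by simp
    finally show ?thesis by simp
  qed
  have vnu: "vge \<nu> 3"
  proof -
    have "\<nu> = W1 - \<mu>*Z1" using W1eq by simp
    moreover have "vge (\<mu>*Z1) (2+1)" using vmu z1 by (intro vge_mult) (simp_all add: defs)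
    ultimately show ?thesis using w1 by (simp add: defs vge_diff)
  qed
  have E2: "vge (a*\<mu> + b*\<mu>^2) 1"
  proof -
    have "vge (a*\<mu>) (0+2)" using va vmu by (intro vge_mult)
    moreover have "vge (b*\<mu>^2) (0+int 2*2)" using vb vmu by (intro vge_mult vge_pow)
    ultimately show ?thesis by (intro vge_add) (auto elim: vge_mono)
  qed
  have Q'ne: "1 + (a*\<mu> + b*\<mu>^2) \<noteq> 0" using unit_subdeg(1)[OF E2] .
  define T1 where "T1 = l*x1+\<beta>"
  define T2 where "T2 = l*x2+\<beta>"
  define T3 where "T3 = l*x3+\<beta>"
  have Qid: "T1*T2*T3 = l^3*(x1*x2*x3) + l^2*\<beta>*(x1*x2+x1*x3+x2*x3) + l*\<beta>^2*(x1+x2+x3) + \<beta>^3"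
    unfolding T1_def T2_def T3_def by (simp add: algebra_simps power2_eq_square power3_eq_cube)
  have e1: "x1+x2+x3 = l^2 - a" using x3 by simp
  have Qv: "T1*T2*T3 = \<beta>^3 * (1 + (a*\<mu> + b*\<mu>^2))"
    unfolding Qid e1 e2 e3 \<mu>_def using bne by (simp add: field_simps power2_eq_square power3_eq_cube)
  have Sid: "x1*T2*T3 + x2*T1*T3 + x3*T1*T2 = 3*l^2*(x1*x2*x3) + 2*l*\<beta>*(x1*x2+x1*x3+x2*x3) + \<beta>^2*(x1+x2+x3)"
    unfolding T1_def T2_def T3_def by (simp add: algebra_simps power2_eq_square power3_eq_cube)
  have Sv: "x1*T2*T3 + x2*T1*T3 + x3*T1*T2 = (-(\<beta>^2)) * (a + 2*b*\<mu>)"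
    unfolding Sid e1 e2 e3 \<mu>_def using bne by (simp add: field_simps power2_eq_square power3_eq_cube)
  have T1ne: "T1 \<noteq> 0" using l1 y1 T1_def by simp
  have T2ne: "T2 \<noteq> 0" using l2 y2 T2_def by simp
  have T3ne: "T3 \<noteq> 0" using Qv Q'ne bne by auto
  have sum: "x1/T1 + x2/T2 + x3/T3 = - (a + 2*b*\<mu>)*\<nu> / (1 + (a*\<mu> + b*\<mu>^2))"
  proof -
    have "x1/T1 + x2/T2 + x3/T3 = (x1*T2*T3 + x2*T1*T3 + x3*T1*T2)/(T1*T2*T3)"
      using T1ne T2ne T3ne by (simp add: field_simps)
    also have "\<dots> = (-(\<beta>^2)) * (a + 2*b*\<mu>) / (\<beta>^3 * (1 + (a*\<mu> + b*\<mu>^2)))" unfolding Sv Qv ..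
    also have "\<dots> = (\<beta>^2 * (-(a + 2*b*\<mu>))) / (\<beta>^2 * (\<beta> * (1 + (a*\<mu> + b*\<mu>^2))))"
      by (simp add: power2_eq_square power3_eq_cube algebra_simps)
    also have "\<dots> = (-(a + 2*b*\<mu>)) / (\<beta> * (1 + (a*\<mu> + b*\<mu>^2)))"
      by (rule nonzero_mult_divide_mult_cancel_left) (simp add: bne)
    also have "\<dots> = - (a + 2*b*\<mu>)*\<nu> / (1 + (a*\<mu> + b*\<mu>^2))"
      unfolding \<nu>_def by simp
    finally show ?thesis .
  qed
  have vsum: "vge (x1/T1 + x2/T2 + x3/T3) 3"
  proof -
    have "vge (- (a + 2*b*\<mu>)*\<nu>) (0 + 3)"
    proof (intro vge_mult vnu vge_uminus vge_add va)
      show "vge (2*b*\<mu>) 0" using vge_mult[OF vge_mult[OF vge_const[of 2] vb] vmu]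
        by (auto elim: vge_mono simp: fls_const_numeral)
    qed
    thus ?thesis unfolding sum by (intro vge_div_unit E2) simp
  qed
  have x1T1: "x1/T1 = x1/y1" using l1 T1_def by simp
  have x2T2: "x2/T2 = x2/y2" using l2 T2_def by simp
  have diff: "x3/(-T3) - x1/y1 - x2/y2 = - (x1/T1 + x2/T2 + x3/T3)"
    unfolding x1T1[symmetric] x2T2[symmetric] by (simp add: algebra_simps)
  have vd: "vge (x3/(-T3) - x1/y1 - x2/y2) 3" unfolding diff by (rule vge_uminus[OF vsum])
  have vz3: "vge (x3/(-T3)) 1"
  proof -
    have eq: "x3/(-T3) = (x3/(-T3) - x1/y1 - x2/y2) + x1/y1 + x2/y2" by simp
    have "vge (x3/(-T3) - x1/y1 - x2/y2) 1" using vd by (rule vge_mono) simp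
    hence "vge ((x3/(-T3) - x1/y1 - x2/y2) + x1/y1 + x2/y2) 1" using z1 z2 by (intro vge_add)
    thus ?thesis by (subst eq)
  qed
  have invT3: "1/T3 = \<nu> + \<mu>*(x3/T3)"
  proof -
    have "\<nu> + \<mu>*(x3/T3) = (T3 - l*x3)/(\<beta>*T3)" unfolding \<mu>_def \<nu>_def using T3ne bne
      by (simp add: field_simps)
    also have "\<dots> = \<beta>/(\<beta>*T3)" unfolding T3_def by simp
    also have "\<dots> = 1/T3" using bne by simp
    finally show ?thesis by simp
  qed
  have vw3: "vge (1/(-T3)) 3"
  proof -
    have q: "x3/T3 = -(x3/(-T3))" by simp
    have "vge (x3/T3) 1" unfolding q using vz3 by (rule vge_uminus)
    hence "vge (\<mu>*(x3/T3)) (2+1)" using vmu by (intro vge_mult)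
    hence "vge (1/T3) 3" unfolding invT3 using vnu by (intro vge_add) auto
    hence "vge (-(1/T3)) 3" by (rule vge_uminus)
    moreover have "1/(-T3) = -(1/T3)" by simp
    ultimately show ?thesis by simp
  qed
  have curve: "(-T3)^2 = x3^3 + a*x3^2 + b*x3"
  proof -
    have "x3^3 + a*x3^2 + b*x3 - T3^2 = x3^3 + (a - l^2)*x3^2 + (b - 2*l*\<beta>)*x3 - \<beta>^2"
      unfolding T3_def by (simp add: algebra_simps power2_eq_square)
    also have "\<dots> = x3^3 - (l^2 - a)*x3^2 + (b - 2*l*\<beta>)*x3 - \<beta>^2"
      by (simp add: algebra_simps)
    also have "\<dots> = x3^3 - (x1+x2+x3)*x3^2 + (x1*x2+x1*x3+x2*x3)*x3 - x1*x2*x3"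
      by (simp only: e1 e2 e3)
    also have "\<dots> = 0" by (simp add: algebra_simps power2_eq_square power3_eq_cube)
    finally show ?thesis by simp
  qed
  show ?thesis using T3ne curve vz3 vw3 vd unfolding T3_def[symmetric] by (intro conjI) simp_all
qed




lemma tan_alg:
  fixes a b x1 y1 l \<beta> :: "'a::field"
  assumes c1: "y1^2 = x1^3 + a*x1^2 + b*x1" and tl: "2*l*y1 = 3*x1^2 + 2*a*x1 + b"
    and l1: "y1 = l*x1 + \<beta>" and x3: "x3 = l^2 - a - x1 - x1"
  shows "x1*x1 + x1*x3 + x1*x3 = b - 2*l*\<beta>" "x1*x1*x3 = \<beta>^2"
    "-l * (y1^3 - a*x1^2*y1 - 2*b*x1*y1) = \<beta>*(3*x1^2*y1 + 2*a*x1*y1 + b*y1)"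
  using assms by algebra+

lemma chord_alg:
  fixes a b x1 y1 x2 y2 l \<beta> :: "'a::field"
  assumes c1: "y1^2 = x1^3 + a*x1^2 + b*x1" and c2: "y2^2 = x2^3 + a*x2^2 + b*x2"
    and l1: "y1 = l*x1 + \<beta>" and l2: "y2 = l*x2 + \<beta>" and x3: "x3 = l^2 - a - x1 - x2"
    and ne: "x1 \<noteq> x2"
  shows "x1*x2 + x1*x3 + x2*x3 = b - 2*l*\<beta> \<and> x1*x2*x3 = \<beta>^2"
proof -
  have g1: "x1^3 + (a - l^2)*x1^2 + (b - 2*l*\<beta>)*x1 - \<beta>^2 = 0" using c1 l1 by algebra
  have g2: "x2^3 + (a - l^2)*x2^2 + (b - 2*l*\<beta>)*x2 - \<beta>^2 = 0" using c2 l2 by algebra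
  have "(x1 - x2)*(x1^2+x1*x2+x2^2 + (a-l^2)*(x1+x2) + (b-2*l*\<beta>)) = 0" using g1 g2 by algebra
  hence f: "x1^2+x1*x2+x2^2 + (a-l^2)*(x1+x2) + (b-2*l*\<beta>) = 0" using ne by simp
  have e2: "x1*x2 + x1*x3 + x2*x3 = b - 2*l*\<beta>" using f x3 by algebra
  have e3: "x1*x2*x3 = \<beta>^2" using g1 e2 x3 by algebra
  show ?thesis using e2 e3 by simp
qed

lemma tan_beta_ne:
  fixes a b x1 y1 l :: "complex fls"
  assumes va: "vge a 0" and vb: "vge b 0"
    and c1: "y1^2 = x1^3 + a*x1^2 + b*x1" and y1: "y1 \<noteq> 0"
    and z1: "vge (x1/y1) 1" and w1: "vge (1/y1) 3"
    and tl: "2*l*y1 = 3*x1^2 + 2*a*x1 + b" and l1: "y1 = l*x1"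
  shows False
proof -
  have x1: "x1 \<noteq> 0" using l1 y1 by auto
  have "x1 * (x1^2 - b) = 0" using c1 tl l1 by algebra
  hence xb: "x1^2 = b" using x1 by simp
  define z where "z = x1/y1"
  define w where "w = 1/y1"
  have zne: "z \<noteq> 0" "w \<noteq> 0" using x1 y1 by (simp_all add: z_def w_def)
  have zb: "z^2 = b * w^2" unfolding z_def w_def xb[symmetric] by (simp add: field_simps)
  have bne: "b \<noteq> 0" using zb zne by auto
  have zw: "w = z^3 + a*z^2*w + b*z*w^2" using zw_rel[OF c1 y1] unfolding z_def w_def by simp
  have E: "vge (- (a*z^2) - b*z*w) 1"
  proof -
    have "vge (a*z^2) (0 + int 2 * 1)" using va z1 by (intro vge_mult vge_pow) (simp_all add: z_def)
    moreover have "vge (b*z*w) (0 + 1 + 3)" using vb z1 w1 by (intro vge_mult) (simp_all add: z_def w_def)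
    ultimately show ?thesis by (intro vge_diff vge_uminus) (auto elim: vge_mono)
  qed
  have z3: "z^3 = w * (1 + (- (a*z^2) - b*z*w))" using zw by algebra
  have sz: "1 \<le> fls_subdegree z" using vge_nonzero_subdeg[OF _ zne(1)] z1 by (simp add: z_def)
  have sb: "0 \<le> fls_subdegree b" using vge_nonzero_subdeg[OF vb bne] .
  have "fls_subdegree (z^3) = fls_subdegree w + 0"
    unfolding z3 using unit_subdeg[OF E] zne by (subst fls_subdegree_mult) auto
  hence s3: "3 * fls_subdegree z = fls_subdegree w" by (simp add: fls_subdegree_pow)
  have "fls_subdegree (z^2) = fls_subdegree b + fls_subdegree (w^2)"
    unfolding zb using bne zne by (subst fls_subdegree_mult) auto
  hence s2: "2 * fls_subdegree z = fls_subdegree b + 2 * fls_subdegree w" by (simp add: fls_subdegree_pow)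
  show False using s2 s3 sz sb by linarith
qed

lemma add_E1:
  fixes a b x1 y1 x2 y2 :: "complex fls"
  assumes va: "vge a 0" and vb: "vge b 0"
    and c1: "y1^2 = x1^3 + a*x1^2 + b*x1" and c2: "y2^2 = x2^3 + a*x2^2 + b*x2"
    and y1: "y1 \<noteq> 0" and y2: "y2 \<noteq> 0"
    and z1: "vge (x1/y1) 1" and w1: "vge (1/y1) 3"
    and z2: "vge (x2/y2) 1" and w2: "vge (1/y2) 3"
  shows "case ec_add a b 0 (Some (x1,y1)) (Some (x2,y2)) of
           None \<Rightarrow> x1/y1 + x2/y2 = 0
         | Some (x3,y3) \<Rightarrow> y3 \<noteq> 0 \<and> y3^2 = x3^3 + a*x3^2 + b*x3
             \<and> vge (x3/y3) 1 \<and> vge (1/y3) 3 \<and> vge (x3/y3 - x1/y1 - x2/y2) 3"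
proof (cases "x1 = x2 \<and> y1 + y2 = 0")
  case True
  hence "ec_add a b 0 (Some (x1,y1)) (Some (x2,y2)) = None" by (simp add: ec_add_def)
  moreover have "x1/y1 + x2/y2 = 0" using True by (simp add: minus_divide_right[symmetric] eq_neg_iff_add_eq_0[symmetric])
  ultimately show ?thesis by simp
next
  case nN: False
  show ?thesis
  proof (cases "x1 = x2")
    case True
    have "(y1 - y2) * (y1 + y2) = 0" using c1 c2 True by algebra
    hence yy: "y2 = y1" using nN True by simp
    define l where "l = (3 * x1^2 + 2 * a * x1 + b) / (2 * y1)"
    define \<beta> where "\<beta> = y1 - l*x1"
    define x3 where "x3 = l^2 - a - x1 - x2"
    have eq: "ec_add a b 0 (Some (x1,y1)) (Some (x2,y2)) = Some (x3, -(l*x3+\<beta>))"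
    proof -
      have "ec_add a b 0 (Some (x1,y1)) (Some (x2,y2)) = Some (x3, -(y1 + l*(x3 - x1)))"
        using nN True unfolding ec_add_def l_def x3_def by (simp add: Let_def)
      moreover have "-(y1 + l*(x3 - x1)) = -(l*x3+\<beta>)" unfolding \<beta>_def by (simp add: algebra_simps)
      ultimately show ?thesis by simp
    qed
    have tl: "2*l*y1 = 3*x1^2 + 2*a*x1 + b" using y1 unfolding l_def by simp
    have l1: "y1 = l*x1 + \<beta>" unfolding \<beta>_def by simp
    have x3': "x3 = l^2 - a - x1 - x1" unfolding x3_def True ..
    note T = tan_alg[OF c1 tl l1 x3']
    have bne: "\<beta> \<noteq> 0"
    proof
      assume "\<beta> = 0"
      thus False using tan_beta_ne[OF va vb c1 y1 z1 w1 tl] l1 by simp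
    qed
    have md: "(-l/\<beta>) * (1 - a*(x1/y1)^2 - b*(x1/y1)*(1/y1+1/y1))
             = (x1/y1)^2+(x1/y1)*(x1/y1)+(x1/y1)^2 + a*(x1/y1+x1/y1)*(1/y1) + b*(1/y1)^2"
    proof -
      have "(-l/\<beta>) * (1 - a*(x1/y1)^2 - b*(x1/y1)*(1/y1+1/y1))
          = (-l * (y1^3 - a*x1^2*y1 - 2*b*x1*y1)) / (\<beta> * y1^3)"
        using y1 bne by (simp add: field_simps power2_eq_square power3_eq_cube)
      also have "\<dots> = (\<beta>*(3*x1^2*y1 + 2*a*x1*y1 + b*y1)) / (\<beta> * y1^3)" using T(3) by simp
      also have "\<dots> = (x1/y1)^2+(x1/y1)*(x1/y1)+(x1/y1)^2 + a*(x1/y1+x1/y1)*(1/y1) + b*(1/y1)^2"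
        using y1 bne by (simp add: field_simps power2_eq_square power3_eq_cube)
      finally show ?thesis .
    qed
    have F: "-(l*x3+\<beta>) \<noteq> 0 \<and> (-(l*x3+\<beta>))^2 = x3^3 + a*x3^2 + b*x3
         \<and> vge (x3/(-(l*x3+\<beta>))) 1 \<and> vge (1/(-(l*x3+\<beta>))) 3
         \<and> vge (x3/(-(l*x3+\<beta>)) - x1/y1 - x1/y1) 3"
      using finish[OF va vb c1 c1 y1 y1 z1 w1 z1 w1 l1 l1 bne x3' T(1) T(2) md] .
    show ?thesis unfolding eq using F True yy by simp
  next
    case False
    define l where "l = (y2 - y1) / (x2 - x1)"
    define \<beta> where "\<beta> = y1 - l*x1"
    define x3 where "x3 = l^2 - a - x1 - x2"
    have eq: "ec_add a b 0 (Some (x1,y1)) (Some (x2,y2)) = Some (x3, -(l*x3+\<beta>))"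
    proof -
      have "ec_add a b 0 (Some (x1,y1)) (Some (x2,y2)) = Some (x3, -(y1 + l*(x3 - x1)))"
        using False unfolding ec_add_def l_def x3_def by (simp add: Let_def)
      moreover have "-(y1 + l*(x3 - x1)) = -(l*x3+\<beta>)" unfolding \<beta>_def by (simp add: algebra_simps)
      ultimately show ?thesis by simp
    qed
    have l1: "y1 = l*x1 + \<beta>" unfolding \<beta>_def by simp
    have l2: "y2 = l*x2 + \<beta>"
    proof -
      have "l*x2 + \<beta> = y1 + l*(x2 - x1)" unfolding \<beta>_def by (simp add: algebra_simps)
      also have "\<dots> = y2" using False unfolding l_def by simp
      finally show ?thesis by simp
    qed
    have x3': "x3 = l^2 - a - x1 - x2" by (rule x3_def)
    note CA = chord_alg[OF c1 c2 l1 l2 x3' False]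
    define Z1 where "Z1 = x1/y1"
    define Z2 where "Z2 = x2/y2"
    define W1 where "W1 = 1/y1"
    define W2 where "W2 = 1/y2"
    note defs = Z1_def Z2_def W1_def W2_def
    have zw1: "W1 = Z1^3 + a*Z1^2*W1 + b*Z1*W1^2" using zw_rel[OF c1 y1] unfolding defs by simp
    have zw2: "W2 = Z2^3 + a*Z2^2*W2 + b*Z2*W2^2" using zw_rel[OF c2 y2] unfolding defs by simp
    note CI = chord_id[OF zw1 zw2]
    have E: "vge (- (a*Z1^2) - b*Z1*(W1+W2)) 1"
    proof -
      have "vge (a*Z1^2) (0 + int 2 * 1)" using va z1 by (intro vge_mult vge_pow) (simp_all add: defs)
      moreover have "vge (b*Z1*(W1+W2)) (0 + 1 + 3)"
        using vb z1 w1 w2 by (intro vge_mult vge_add) (simp_all add: defs)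
      ultimately show ?thesis by (intro vge_diff vge_uminus) (auto elim: vge_mono)
    qed
    have Dne: "1 - a*Z1^2 - b*Z1*(W1+W2) \<noteq> 0"
      using unit_subdeg(1)[OF E] by (simp add: algebra_simps)
    have Zne: "Z1 \<noteq> Z2"
    proof
      assume h: "Z1 = Z2"
      hence "(W2 - W1) * (1 - a*Z1^2 - b*Z1*(W1+W2)) = 0" using CI by simp
      hence "W1 = W2" using Dne by simp
      hence "y1 = y2" unfolding defs using y1 y2 by simp
      hence "x1 = x2" using h y1 unfolding defs by simp
      thus False using False by simp
    qed
    have bne: "\<beta> \<noteq> 0"
    proof
      assume b0: "\<beta> = 0"
      hence "y1 = l*x1" "y2 = l*x2" using l1 l2 by simp_all
      hence "Z1 = 1/l" "Z2 = 1/l" unfolding defs using y1 y2 by (simp_all add: field_simps)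
      thus False using Zne by simp
    qed
    have Wi: "W1 = (-l/\<beta>)*Z1 + 1/\<beta>" "W2 = (-l/\<beta>)*Z2 + 1/\<beta>"
    proof -
      have "(-l/\<beta>)*Z1 + 1/\<beta> = (y1 - l*x1)/(\<beta>*y1)" unfolding defs using y1 bne
        by (simp add: field_simps)
      also have "\<dots> = W1" using bne unfolding defs \<beta>_def by simp
      finally show "W1 = (-l/\<beta>)*Z1 + 1/\<beta>" by simp
      have "(-l/\<beta>)*Z2 + 1/\<beta> = (y2 - l*x2)/(\<beta>*y2)" unfolding defs using y2 bne
        by (simp add: field_simps)
      also have "\<dots> = W2" using bne l2 unfolding defs by simp
      finally show "W2 = (-l/\<beta>)*Z2 + 1/\<beta>" by simp
    qed
    have "(Z2 - Z1) * ((-l/\<beta>) * (1 - a*Z1^2 - b*Z1*(W1+W2))) = (Z2-Z1)*(Z1^2+Z1*Z2+Z2^2 + a*(Z1+Z2)*W2 + b*W2^2)"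
    proof -
      have "W2 - W1 = (-l/\<beta>)*(Z2 - Z1)" using bne by (subst Wi(1), subst Wi(2)) (simp add: field_simps)
      hence "(Z2 - Z1) * ((-l/\<beta>) * (1 - a*Z1^2 - b*Z1*(W1+W2))) = (W2 - W1) * (1 - a*Z1^2 - b*Z1*(W1+W2))"
        by (simp only: mult.assoc mult.commute mult.left_commute)
      thus ?thesis using CI by simp
    qed
    moreover have "Z2 - Z1 \<noteq> 0" using Zne by simp
    ultimately have md: "(-l/\<beta>) * (1 - a*Z1^2 - b*Z1*(W1+W2)) = Z1^2+Z1*Z2+Z2^2 + a*(Z1+Z2)*W2 + b*W2^2"
      using mult_left_cancel by blast
    have F: "-(l*x3+\<beta>) \<noteq> 0 \<and> (-(l*x3+\<beta>))^2 = x3^3 + a*x3^2 + b*x3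
         \<and> vge (x3/(-(l*x3+\<beta>))) 1 \<and> vge (1/(-(l*x3+\<beta>))) 3
         \<and> vge (x3/(-(l*x3+\<beta>)) - x1/y1 - x2/y2) 3"
      using finish[OF va vb c1 c2 y1 y2 z1 w1 z2 w2 l1 l2 bne x3' _ _ md[unfolded defs]] CA by blast
    show ?thesis unfolding eq using F by simp
  qed
qed




lemma nontors_fls:
  fixes a b x0 y0 :: "complex fls"
  assumes va: "vge a 0" and vb: "vge b 0"
    and c0: "y0^2 = x0^3 + a*x0^2 + b*x0" and y0: "y0 \<noteq> 0"
    and z0: "vge (x0/y0) 1" and w0: "vge (1/y0) 3" and nz: "(x0/y0) $$ 1 \<noteq> 0"
  shows "ec_mult a b 0 (Suc n) (Some (x0,y0)) \<noteq> None"
proof -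
  have "\<exists>x y. ec_mult a b 0 (Suc n) (Some (x0,y0)) = Some (x,y) \<and> y^2 = x^3 + a*x^2 + b*x \<and> y \<noteq> 0
          \<and> vge (x/y) 1 \<and> vge (1/y) 3 \<and> (x/y) $$ 1 = of_nat (Suc n) * (x0/y0) $$ 1"
  proof (induction n)
    case 0
    then show ?case using c0 y0 z0 w0 by (simp add: ec_add_def)
  next
    case (Suc n)
    then obtain x y where h: "ec_mult a b 0 (Suc n) (Some (x0,y0)) = Some (x,y)" "y^2 = x^3 + a*x^2 + b*x"
      "y \<noteq> 0" "vge (x/y) 1" "vge (1/y) 3" "(x/y) $$ 1 = of_nat (Suc n) * (x0/y0) $$ 1" by blast
    have A: "case ec_add a b 0 (Some (x0,y0)) (Some (x,y)) of
           None \<Rightarrow> x0/y0 + x/y = 0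
         | Some (x3,y3) \<Rightarrow> y3 \<noteq> 0 \<and> y3^2 = x3^3 + a*x3^2 + b*x3
             \<and> vge (x3/y3) 1 \<and> vge (1/y3) 3 \<and> vge (x3/y3 - x0/y0 - x/y) 3"
      by (rule add_E1[OF va vb c0 h(2) y0 h(3) z0 w0 h(4) h(5)])
    have em: "ec_mult a b 0 (Suc (Suc n)) (Some (x0,y0)) = ec_add a b 0 (Some (x0,y0)) (Some (x,y))"
      using h(1) by simp
    show ?case
    proof (cases "ec_add a b 0 (Some (x0,y0)) (Some (x,y))")
      case None
      hence "x0/y0 + x/y = 0" using A by simp
      hence "(x0/y0 + x/y) $$ 1 = 0" by simp
      hence "(1 + of_nat (Suc n)) * (x0/y0) $$ 1 = 0" using h(6) by (simp add: algebra_simps)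
      moreover have "(1 + of_nat (Suc n) :: complex) \<noteq> 0"
        by (metis of_nat_Suc of_nat_eq_0_iff nat.distinct(1) add.commute)
      ultimately show ?thesis using nz by simp
    next
      case (Some p)
      obtain x3 y3 where p: "p = (x3,y3)" by (cases p)
      have B: "y3 \<noteq> 0 \<and> y3^2 = x3^3 + a*x3^2 + b*x3 \<and> vge (x3/y3) 1 \<and> vge (1/y3) 3
               \<and> vge (x3/y3 - x0/y0 - x/y) 3" using A Some p by simp
      hence "(x3/y3 - x0/y0 - x/y) $$ 1 = 0" using vge_coeff[of "x3/y3 - x0/y0 - x/y" 3 1] by simp
      hence "(x3/y3) $$ 1 = of_nat (Suc (Suc n)) * (x0/y0) $$ 1" using h(6) by (simp add: algebra_simps)
      thus ?thesis using B em Some p by simp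
    qed
  qed
  thus ?thesis by auto
qed




lemma point_alg:
  fixes K S t L x0 y0 :: "'a::field"
  assumes S2: "S^2 = 1 - K^2" and K: "K \<noteq> 0" and S: "S \<noteq> 0" and t: "t \<noteq> 0"
    and t1: "1 - t^2 \<noteq> 0" and tS: "t^2 - S^2 \<noteq> 0"
    and L: "L = (1 - t^2)/K^2"
    and x0: "x0 = (1-K^2)*L/(1 - K^2*L)" and y0: "y0 = K*S*L*(1-L)/((1-K^2*L)*t)"
  shows "y0^2 = x0^3 + (-(1+L))*x0^2 + L*x0" "y0 \<noteq> 0"
    "x0/y0 = K*S*t/(t^2 - S^2)" "1/y0 = K^3*t^3/S/(1-t^2)/(t^2 - S^2)"
proof -
  have d: "1 - K^2*L = t^2" using K unfolding L by (simp add: field_simps)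
  have mL: "1 - L = (t^2 - S^2)/K^2" using K unfolding L S2 by (simp add: field_simps)
  have Lne: "L \<noteq> 0" using K t1 unfolding L by simp
  have mLne: "1 - L \<noteq> 0" using K tS unfolding mL by simp
  have x0': "x0 = (1-K^2)*L/t^2" unfolding x0 d ..
  have y0': "y0 = K*S*L*(1-L)/t^3" unfolding y0 d by (simp add: power2_eq_square power3_eq_cube)
  show yne: "y0 \<noteq> 0" unfolding y0' using K S Lne mLne t by simp
  show "x0/y0 = K*S*t/(t^2 - S^2)"
  proof -
    have "x0/y0 = S^2*t/(K*S*(1-L))" unfolding x0' y0' S2 using K S Lne mLne t
      by (simp add: field_simps power2_eq_square power3_eq_cube)
    also have "\<dots> = K*S*t/(t^2 - S^2)" unfolding mL using K S tS
      by (simp add: field_simps power2_eq_square)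
    finally show ?thesis .
  qed
  show "1/y0 = K^3*t^3/S/(1-t^2)/(t^2 - S^2)"
  proof -
    have "y0 = S*(1-t^2)*(t^2-S^2)/(K^3*t^3)" unfolding y0' mL using K t
      by (simp add: L field_simps power2_eq_square power3_eq_cube)
    hence "1/y0 = (K^3*t^3)/(S*(1-t^2)*(t^2-S^2))" by simp
    thus ?thesis by (simp add: divide_divide_eq_left mult.assoc)
  qed
  show "y0^2 = x0^3 + (-(1+L))*x0^2 + L*x0"
  proof -
    have "x0^3 + (-(1+L))*x0^2 + L*x0 = x0*(x0-1)*(x0-L)" by (simp add: algebra_simps power2_eq_square power3_eq_cube)
    also have "x0 - 1 = (L - 1)/t^2" unfolding x0' using t d by (simp add: field_simps)
    also have "x0 - L = K^2*L*(L-1)/t^2" unfolding x0' using t d by (simp add: field_simps) algebra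
    finally have "x0^3 + (-(1+L))*x0^2 + L*x0 = (1-K^2)*L*(L - 1)*(K^2*L*(L-1))/t^6"
      unfolding x0' using t by (simp add: field_simps)
    also have "\<dots> = y0^2" unfolding y0' S2[symmetric] using t by (simp add: field_simps) algebra
    finally show ?thesis by simp
  qed
qed




lemma phi_K_const: "phi (K_const a) = fls_const a"
  by (simp add: K_const_def phi_Fract PP_def fps_of_poly_const)

lemma phi_K_sqrt: "phi K_sqrt = fls_X"
  by (simp add: K_sqrt_def phi_Fract PP_def)

lemma unit0: assumes "vge D 0" "D $$ 0 \<noteq> 0" shows "D \<noteq> 0" "fls_subdegree D = 0"
proof -
  show "D \<noteq> 0" using assms(2) by auto
  show "fls_subdegree D = 0" using assms by (intro fls_subdegree_eqI) (auto simp: vge_def)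
qed

lemma vge_div_D: assumes "vge N k" "vge D 0" "D $$ 0 \<noteq> 0" shows "vge (N / D) k"
proof -
  have "inverse D \<noteq> 0" "fls_subdegree (inverse D) = 0" using unit0[OF assms(2,3)] by simp_all
  hence "vge (inverse D) 0" using vge_iff by simp
  from vge_mult[OF assms(1) this] show ?thesis by (simp add: divide_inverse)
qed

theorem proposition2p1:
  fixes c :: real
  assumes "0 < c" and "c < 1"
  shows "on_curve (leg_a2 c) (leg_a4 c) 0 (billiard_B c)
         \<and> \<not> ec_torsion (leg_a2 c) (leg_a4 c) 0 (billiard_B c)"
proof -
  define k where "k = complex_of_real c"
  define s where "s = complex_of_real (sqrt (1 - c^2))"
  define K where "K = (fls_const k :: complex fls)"
  define S where "S = (fls_const s :: complex fls)"
  define X where "X = (fls_X :: complex fls)"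
  define Lf where "Lf = (1 - X^2)/K^2"
  have k0: "k \<noteq> 0" using assms unfolding k_def by simp
  have s2: "s^2 = 1 - k^2"
  proof -
    have "c^2 \<le> 1" using assms by (simp add: power_le_one)
    hence "sqrt (1 - c^2) ^ 2 = 1 - c^2" by simp
    hence "s^2 = complex_of_real (1 - c^2)" unfolding s_def by (metis of_real_power)
    thus ?thesis unfolding k_def by simp
  qed
  have s0: "s \<noteq> 0"
  proof -
    have "c^2 < 1" using assms by (simp add: abs_square_less_1)
    thus ?thesis unfolding s_def by simp
  qed
  have K0: "K \<noteq> 0" using k0 unfolding K_def by (simp add: fls_const_nonzero)
  have S0: "S \<noteq> 0" using s0 unfolding S_def by (simp add: fls_const_nonzero)
  have S2: "S^2 = 1 - K^2" unfolding S_def K_def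
    by (simp add: fls_const_power[symmetric] s2 fls_minus_const[symmetric])
  have X0: "X \<noteq> 0" unfolding X_def by simp
  have c1: "(1 - X^2) $$ 0 = 1" unfolding X_def by simp
  have c2: "(X^2 - S^2) $$ 0 = -(s^2)" unfolding X_def S_def by (simp add: fls_const_power[symmetric])
  have t1: "1 - X^2 \<noteq> 0" using c1 by auto
  have tS: "X^2 - S^2 \<noteq> 0" using c2 s0 by auto
  have philam: "phi (K_lambda c) = Lf"
    unfolding K_lambda_def Lf_def
    by (simp add: phi_simps phi_K_const phi_K_sqrt K_def X_def k_def fls_const_power[symmetric])
  obtain xB yB where B: "billiard_B c = Some (xB, yB)"
    and xB: "xB = (1 - K_const (complex_of_real c)^2) * K_lambda c / (1 - K_const (complex_of_real c)^2 * K_lambda c)"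
    and yB: "yB = K_const (complex_of_real c) * K_const (complex_of_real (sqrt (1 - c^2))) * K_lambda c * (1 - K_lambda c)
                 / ((1 - K_const (complex_of_real c)^2 * K_lambda c) * K_sqrt)"
    unfolding billiard_B_def Let_def by simp
  have px: "phi xB = (1-K^2)*Lf/(1 - K^2*Lf)"
    unfolding xB by (simp add: phi_simps philam phi_K_const K_def k_def)
  have py: "phi yB = K*S*Lf*(1-Lf)/((1-K^2*Lf)*X)"
    unfolding yB by (simp add: phi_simps philam phi_K_const phi_K_sqrt K_def k_def S_def s_def X_def)
  note PA = point_alg[OF S2 K0 S0 X0 t1 tS Lf_def px py]
  have pa2: "phi (leg_a2 c) = -(1+Lf)" unfolding leg_a2_def by (simp add: phi_simps philam)
  have pa4: "phi (leg_a4 c) = Lf" unfolding leg_a4_def by (simp add: philam)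
  have curve: "on_curve (leg_a2 c) (leg_a4 c) 0 (billiard_B c)"
  proof -
    have "phi (yB^2) = phi (xB^3 + leg_a2 c * xB^2 + leg_a4 c * xB + 0)"
      using PA(1) by (simp add: phi_simps pa2 pa4)
    hence "yB^2 = xB^3 + leg_a2 c * xB^2 + leg_a4 c * xB + 0" by (rule phi_inj)
    thus ?thesis unfolding on_curve_def B by simp
  qed
  have vK: "vge K 0" "vge S 0" "vge X 1" unfolding K_def S_def X_def by simp_all
  have vK2: "vge (K^2) 0" using vge_pow[OF vK(1), of 2] by simp
  have cK2: "(K^2) $$ 0 \<noteq> 0" unfolding K_def using k0 by (simp add: fls_const_power[symmetric])
  have vL: "vge Lf 0"
  proof -
    have "vge (1 - X^2) 0" using vge_pow[OF vK(3), of 2] by (intro vge_diff) (auto elim: vge_mono)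
    thus ?thesis unfolding Lf_def using vK2 cK2 by (rule vge_div_D)
  qed
  have va: "vge (-(1+Lf)) 0" using vL by (intro vge_uminus vge_add vge_one)
  have vD1: "vge (1 - X^2) 0" using vge_pow[OF vK(3), of 2] by (intro vge_diff) (auto elim: vge_mono)
  have vD2: "vge (X^2 - S^2) 0" using vge_pow[OF vK(3), of 2] vge_pow[OF vK(2), of 2]
    by (intro vge_diff) (auto elim: vge_mono)
  have vz: "vge (phi xB / phi yB) 1"
  proof -
    have "vge (K*S*X) (0+0+1)" using vK by (intro vge_mult)
    thus ?thesis unfolding PA(3) using vD2 c2 s0 by (intro vge_div_D) simp_all
  qed
  have vw: "vge (1 / phi yB) 3"
  proof -
    have "vge (K^3*X^3) (int 3 * 0 + int 3 * 1)" using vK by (intro vge_mult vge_pow)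
    hence "vge (K^3*X^3/S) 3" by (intro vge_div_D[OF _ vK(2)]) (simp_all add: S_def s0)
    hence "vge (K^3*X^3/S/(1-X^2)) 3" by (intro vge_div_D[OF _ vD1]) (simp_all add: X_def)
    thus ?thesis unfolding PA(4) by (intro vge_div_D[OF _ vD2]) (simp_all add: X_def S_def s0 fls_const_power[symmetric])
  qed
  have nz: "(phi xB / phi yB) $$ 1 \<noteq> 0"
  proof -
    have c2': "(X^2 - S^2) $$ 0 \<noteq> 0" using c2 s0 by auto
    have "fls_subdegree (inverse (X^2 - S^2)) = 0" using unit0(2)[OF vD2 c2'] by simp
    moreover have "fls_subdegree (K*S*X) = 1" using K0 S0 unfolding K_def S_def X_def by simp
    moreover have "K*S*X \<noteq> 0" "inverse (X^2 - S^2) \<noteq> 0" using K0 S0 X0 tS by simp_all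
    ultimately have "fls_subdegree (K*S*X * inverse (X^2 - S^2)) = 1" by simp
    moreover have "K*S*X * inverse (X^2 - S^2) \<noteq> 0" using K0 S0 X0 tS by simp
    ultimately show ?thesis unfolding PA(3) unfolding divide_inverse by (metis nth_fls_subdegree_nonzero)
  qed
  have ntors: "\<not> ec_torsion (leg_a2 c) (leg_a4 c) 0 (billiard_B c)"
  proof
    assume "ec_torsion (leg_a2 c) (leg_a4 c) 0 (billiard_B c)"
    then obtain n where n: "n > 0" "ec_mult (leg_a2 c) (leg_a4 c) 0 n (billiard_B c) = None"
      unfolding ec_torsion_def by blast
    then obtain m where m: "n = Suc m" by (cases n) auto
    have "mP (ec_mult (leg_a2 c) (leg_a4 c) 0 n (billiard_B c)) = None" using n by (simp add: mP_def)
    hence "ec_mult (-(1+Lf)) Lf 0 (Suc m) (Some (phi xB, phi yB)) = None"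
      unfolding mP_mult m using pa2 pa4 phi_0 B by (simp add: mP_def)
    moreover have "ec_mult (-(1+Lf)) Lf 0 (Suc m) (Some (phi xB, phi yB)) \<noteq> None"
      by (rule nontors_fls[OF va vL PA(1) PA(2) vz vw nz])
    ultimately show False by simp
  qed
  show ?thesis using curve ntors by simp
qed


end
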